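(* Let $G=(V,E)$ be a simple graph on $n$ vertices and let $\bar G$ be its complement. Then $\varepsilon(G)$ is at most the number of acyclic orientations of the edges of $\bar G$. Equality holds if and only if $G$ is a complete $p$-partite graph for some $p\in[n]$.
   Context: For an undirected simple graph $G=(V,E)$, $\varepsilon(G)$ denotes the maximum, over all acyclic orientations of $E$, of the number of linear extensions of the partial order induced on $V$ (where $u<v$ iff there is a directed path from $u$ to $v$; a linear extension of a poset on an $n$-element set is an order-preserving bijection onto $[n]$). A complete $p$-partite graph is one whose vertex set is partitioned into $p$ nonempty parts, with two vertices adjacent iff they lie in different parts. *)

theory Defs
  imports Main "HOL-Library.Disjoint_Sets"
begin

text \<open>A simple graph on a finite vertex set V is given by a symmetric, irreflexive
edge relation E \<subseteq> V \<times> V (each undirected edge {u,v} is represented by both (u,v) and (v,u)).\<close>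

definition simple_graph :: "'a set \<Rightarrow> ('a \<times> 'a) set \<Rightarrow> bool" where
  "simple_graph V E \<longleftrightarrow> finite V \<and> E \<subseteq> V \<times> V \<and> sym E \<and> irrefl E"

definition compl_graph :: "'a set \<Rightarrow> ('a \<times> 'a) set \<Rightarrow> ('a \<times> 'a) set" where
  "compl_graph V E = {(u, v). u \<in> V \<and> v \<in> V \<and> u \<noteq> v \<and> (u, v) \<notin> E}"

definition orientation :: "('a \<times> 'a) set \<Rightarrow> ('a \<times> 'a) set \<Rightarrow> bool" where
  "orientation E R \<longleftrightarrow> R \<subseteq> E \<and> (\<forall>u v. (u, v) \<in> E \<longrightarrow> ((u, v) \<in> R \<longleftrightarrow> (v, u) \<notin> R))"

definition acyclic_orientations :: "('a \<times> 'a) set \<Rightarrow> ('a \<times> 'a) set set" where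
  "acyclic_orientations E = {R. orientation E R \<and> acyclic R}"

text \<open>Linear extensions of the poset on V induced by R (u < v iff there is a directed
path from u to v, i.e. (u,v) in the transitive closure of R): order-preserving bijections V \<rightarrow> {1..n},
taken extensionally (undefined outside V).\<close>
definition linear_extensions :: "'a set \<Rightarrow> ('a \<times> 'a) set \<Rightarrow> ('a \<Rightarrow> nat) set" where
  "linear_extensions V R =
     {f. bij_betw f V {1..card V} \<and> (\<forall>x. x \<notin> V \<longrightarrow> f x = undefined)
         \<and> (\<forall>u\<in>V. \<forall>v\<in>V. (u, v) \<in> R\<^sup>+ \<longrightarrow> f u < f v)}"

definition eps :: "'a set \<Rightarrow> ('a \<times> 'a) set \<Rightarrow> nat" where
  "eps V E = Max ((\<lambda>R. card (linear_extensions V R)) ` acyclic_orientations E)"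

definition complete_multipartite :: "'a set \<Rightarrow> ('a \<times> 'a) set \<Rightarrow> nat \<Rightarrow> bool" where
  "complete_multipartite V E p \<longleftrightarrow>
     (\<exists>P. partition_on V P \<and> finite P \<and> card P = p \<and>
          (\<forall>u\<in>V. \<forall>v\<in>V. (u, v) \<in> E \<longleftrightarrow> \<not> (\<exists>B\<in>P. u \<in> B \<and> v \<in> B)))"

end

theory Submission
  imports Defs
begin

definition ori :: "('a \<Rightarrow> nat) \<Rightarrow> ('a \<times> 'a) set \<Rightarrow> ('a \<times> 'a) set" where
  "ori g S = {(x,y). (x,y) \<in> S \<and> g x < g y}"

lemma trancl_lt: "(x,y) \<in> {(x,y). (g::'a\<Rightarrow>nat) x < g y}\<^sup>+ \<Longrightarrow> g x < g y"
  by (induction rule: trancl_induct) auto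

lemma acyclic_ori: "acyclic (ori g S)"
proof -
  have "acyclic {(x,y). (g::'a\<Rightarrow>nat) x < g y}"
    unfolding acyclic_def
  proof
    fix x show "(x, x) \<notin> {(x, y). g x < g y}\<^sup>+"
    proof
      assume "(x, x) \<in> {(x, y). g x < g y}\<^sup>+"
      then have "g x < g x" by (rule trancl_lt)
      then show False by simp
    qed
  qed
  moreover have "ori g S \<subseteq> {(x,y). g x < g y}" unfolding ori_def by auto
  ultimately show ?thesis using acyclic_subset by blast
qed

lemma orientation_ori:
  assumes "sym S" "\<And>x y. (x,y) \<in> S \<Longrightarrow> g x \<noteq> g y"
  shows "orientation S (ori g S)"
  unfolding orientation_def
proof (intro conjI allI impI)
  show "ori g S \<subseteq> S" unfolding ori_def by auto
  fix u v assume uv: "(u,v) \<in> S"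
  then have "(v,u) \<in> S" using assms(1) unfolding sym_def by blast
  moreover have "g u \<noteq> g v" using assms(2) uv by blast
  ultimately show "((u,v) \<in> ori g S) = ((v,u) \<notin> ori g S)" using uv unfolding ori_def by auto
qed

lemma ori_acyc:
  assumes "sym S" "\<And>x y. (x,y) \<in> S \<Longrightarrow> g x \<noteq> g y"
  shows "ori g S \<in> acyclic_orientations S"
  using assms acyclic_ori orientation_ori unfolding acyclic_orientations_def by blast

lemma finite_acyc: "finite S \<Longrightarrow> finite (acyclic_orientations S)"
  unfolding acyclic_orientations_def orientation_def
  by (rule finite_subset[of _ "Pow S"]) auto

lemma compl_props:
  assumes "simple_graph V E"
  shows "sym (compl_graph V E)" "finite (compl_graph V E)" "compl_graph V E \<subseteq> V \<times> V"
proof -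
  show "sym (compl_graph V E)" using assms unfolding sym_def compl_graph_def simple_graph_def by auto
  show c: "compl_graph V E \<subseteq> V \<times> V" unfolding compl_graph_def by auto
  show "finite (compl_graph V E)" using assms c unfolding simple_graph_def
    by (meson finite_SigmaI finite_subset)
qed

lemma acyc_E_nonempty:
  assumes "simple_graph V E"
  shows "acyclic_orientations E \<noteq> {}"
proof -
  obtain g where g: "bij_betw g V {0..<card V}" using assms ex_bij_betw_finite_nat
    unfolding simple_graph_def by blast
  have "ori g E \<in> acyclic_orientations E"
  proof (rule ori_acyc)
    show "sym E" using assms unfolding simple_graph_def by auto
    fix x y assume xy: "(x,y) \<in> E"
    have EV: "E \<subseteq> V \<times> V" and ir: "irrefl E" using assms unfolding simple_graph_def by auto
    have "x \<in> V" "y \<in> V" using xy EV by auto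
    moreover have "x \<noteq> y" using xy ir unfolding irrefl_def by auto
    moreover have "inj_on g V" using g unfolding bij_betw_def by simp
    ultimately show "g x \<noteq> g y" by (meson inj_on_contraD)
  qed
  then show ?thesis by blast
qed

lemma phi_in:
  assumes "simple_graph V E" "f \<in> linear_extensions V R"
  shows "ori f (compl_graph V E) \<in> acyclic_orientations (compl_graph V E)"
proof (rule ori_acyc)
  show "sym (compl_graph V E)" using compl_props assms by blast
  fix x y assume xy: "(x,y) \<in> compl_graph V E"
  have "x \<in> V" "y \<in> V" "x \<noteq> y" using xy unfolding compl_graph_def by auto
  moreover have "inj_on f V" using assms(2) unfolding linear_extensions_def bij_betw_def by simp
  ultimately show "f x \<noteq> f y" by (meson inj_on_contraD)
qed

lemma bij_rank:
  assumes "bij_betw f V {1..card V}" "u \<in> V" "finite V"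
  shows "f u = card {v\<in>V. f v \<le> f u}"
proof -
  have inj: "inj_on f {v\<in>V. f v \<le> f u}" using assms unfolding bij_betw_def inj_on_def by auto
  have "f ` {v\<in>V. f v \<le> f u} = {k \<in> f ` V. k \<le> f u}" by auto
  also have "\<dots> = {1..f u}"
  proof -
    have im: "f ` V = {1..card V}" using assms unfolding bij_betw_def by auto
    have "f u \<le> card V" using im assms(2) by (metis atLeastAtMost_iff image_eqI)
    then show ?thesis unfolding im by auto
  qed
  finally show ?thesis using card_image[OF inj] by simp
qed

lemma bij_eq_by_order:
  assumes "bij_betw f V {1..card V}" "bij_betw g V {1..card V}" "finite V"
    and "\<And>u v. u \<in> V \<Longrightarrow> v \<in> V \<Longrightarrow> f u < f v \<longleftrightarrow> g u < g v"
    and "u \<in> V"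
  shows "f u = g u"
proof -
  have "{v\<in>V. f v \<le> f u} = {v\<in>V. g v \<le> g u}" using assms(4)[of u] assms(5) by (auto simp: not_less[symmetric])
  then show ?thesis using bij_rank[OF assms(1) assms(5,3)] bij_rank[OF assms(2) assms(5,3)] by simp
qed

lemma phi_inj:
  assumes "simple_graph V E" "orientation E R"
  shows "inj_on (\<lambda>f. ori f (compl_graph V E)) (linear_extensions V R)"
proof (rule inj_onI)
  fix f g assume f: "f \<in> linear_extensions V R" and g: "g \<in> linear_extensions V R"
    and eq: "ori f (compl_graph V E) = ori g (compl_graph V E)"
  have fin: "finite V" and EV: "E \<subseteq> V \<times> V" and symE: "sym E" using assms unfolding simple_graph_def by auto
  have ord: "f u < f v \<longleftrightarrow> g u < g v" if uv: "u \<in> V" "v \<in> V" for u v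
  proof (cases "u = v")
    case True then show ?thesis by simp
  next
    case False
    show ?thesis
    proof (cases "(u,v) \<in> E")
      case True
      show ?thesis
      proof (cases "(u,v) \<in> R")
        case True
        then have "(u,v) \<in> R\<^sup>+" by blast
        then show ?thesis using f g uv unfolding linear_extensions_def by auto
      next
        case False
        then have "(v,u) \<in> R" using assms(2) \<open>(u,v)\<in>E\<close> unfolding orientation_def by blast
        then have "(v,u) \<in> R\<^sup>+" by blast
        then have "f v < f u" "g v < g u" using f g uv unfolding linear_extensions_def by auto
        then show ?thesis by simp
      qed
    next
      case False
      then have "(u,v) \<in> compl_graph V E" using uv \<open>u \<noteq> v\<close> unfolding compl_graph_def by auto
      then show ?thesis using eq unfolding ori_def by blast
    qed
  qed
  show "f = g"
  proof
    fix x show "f x = g x"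
    proof (cases "x \<in> V")
      case True
      then show ?thesis using bij_eq_by_order[of f V g, OF _ _ fin ord] f g
        unfolding linear_extensions_def by auto
    next
      case False
      then show ?thesis using f g unfolding linear_extensions_def by auto
    qed
  qed
qed

lemma card_le:
  assumes "simple_graph V E" "R \<in> acyclic_orientations E"
  shows "card (linear_extensions V R) \<le> card (acyclic_orientations (compl_graph V E))"
proof (rule card_inj_on_le)
  show "inj_on (\<lambda>f. ori f (compl_graph V E)) (linear_extensions V R)"
    using phi_inj assms unfolding acyclic_orientations_def by blast
  show "(\<lambda>f. ori f (compl_graph V E)) ` linear_extensions V R \<subseteq> acyclic_orientations (compl_graph V E)"
    using phi_in assms by blast
  show "finite (acyclic_orientations (compl_graph V E))" using finite_acyc compl_props assms by blast
qed


lemma topo_aux: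
  assumes "finite V"
  shows "\<forall>T. acyclic T \<and> T \<subseteq> V \<times> V \<longrightarrow> (\<exists>f. bij_betw f V {1..card V} \<and> (\<forall>(u,v)\<in>T. f u < (f v::nat)))"
  using assms
proof (induction V rule: finite_remove_induct)
  case empty
  then show ?case by (auto simp: bij_betw_def)
next
  case (remove A)
  show ?case
  proof (intro allI impI)
    fix T assume T: "acyclic T \<and> T \<subseteq> A \<times> A"
    have "finite T" using T remove(1) by (meson finite_SigmaI finite_subset)
    then have "wf T" using T finite_acyclic_wf by blast
    then obtain m where m: "m \<in> A" "\<And>y. (y,m) \<in> T \<Longrightarrow> y \<notin> A"
      using remove(2) unfolding wf_eq_minimal by blast
    have nm: "(y,m) \<notin> T" for y using m T by blast
    define T' where "T' = T \<inter> (A-{m}) \<times> (A-{m})"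
    have "acyclic T'" using T acyclic_subset unfolding T'_def by blast
    then obtain f' where f': "bij_betw f' (A-{m}) {1..card (A-{m})}" "\<forall>(u,v)\<in>T'. f' u < f' v"
      using remove(4)[OF m(1)] unfolding T'_def by blast
    have cA: "card (A-{m}) = card A - 1" using m(1) remove(1) by simp
    have cA1: "card A \<ge> 1" using m(1) remove(1) by (metis One_nat_def Suc_leI card_gt_0_iff empty_iff)
    define f where "f x = (if x = m then 1 else f' x + 1)" for x
    have f'pos: "f' x \<ge> 1" if "x \<in> A-{m}" for x 
    proof -
      have "f' x \<in> {1..card (A-{m})}" using bij_betw_apply[OF f'(1) that] .
      then show ?thesis by simp
    qed
    have inj: "inj_on f A"
    proof (rule inj_onI)
      fix x y assume xy: "x \<in> A" "y \<in> A" "f x = f y"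
      show "x = y"
      proof (cases "x = m")
        case True
        show ?thesis
        proof (rule ccontr)
          assume "x \<noteq> y"
          then have "y \<in> A - {m}" using True xy by auto
          then have "f' y \<ge> 1" by (rule f'pos)
          moreover have "f y = 1" using xy True by (simp add: f_def)
          ultimately show False using \<open>y \<in> A - {m}\<close> by (simp add: f_def)
        qed
      next
        case False
        show ?thesis
        proof (cases "y = m")
          case True
          have "x \<in> A - {m}" using False xy by auto
          then have "f' x \<ge> 1" by (rule f'pos)
          moreover have "f x = 1" using xy True by (simp add: f_def)
          ultimately show ?thesis using False by (simp add: f_def)
        next
          case False2: False
          have "f' x = f' y" using xy False False2 by (simp add: f_def)
          moreover have "inj_on f' (A-{m})" using f'(1) by (simp add: bij_betw_def)
          moreover have "x \<in> A-{m}" "y \<in> A-{m}" using xy False False2 by auto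
          ultimately show ?thesis by (meson inj_onD)
        qed
      qed
    qed
    have im: "f ` A = {1..card A}"
    proof
      show "f ` A \<subseteq> {1..card A}"
      proof
        fix k assume "k \<in> f ` A"
        then obtain x where x: "x \<in> A" "k = f x" by blast
        show "k \<in> {1..card A}"
        proof (cases "x = m")
          case True then show ?thesis using x cA1 unfolding f_def by auto
        next
          case False
          then have "f' x \<in> {1..card A - 1}" using x f'(1) cA unfolding bij_betw_def by auto
          then show ?thesis using x False cA1 unfolding f_def by auto
        qed
      qed
      show "{1..card A} \<subseteq> f ` A"
      proof
        fix k assume k: "k \<in> {1..card A}"
        show "k \<in> f ` A"
        proof (cases "k = 1")
          case True then show ?thesis using m(1) unfolding f_def by force
        next
          case False
          then have "k - 1 \<in> {1..card (A-{m})}" using k cA by auto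
          then obtain x where x: "x \<in> A-{m}" "f' x = k - 1" using f'(1) unfolding bij_betw_def by (metis imageE)
          then have "f x = k" using False k unfolding f_def by auto
          then show ?thesis using x by blast
        qed
      qed
    qed
    have mono: "\<forall>(u,v)\<in>T. f u < f v"
    proof (intro ballI, clarify)
      fix u v assume uv: "(u,v) \<in> T"
      then have vm: "v \<noteq> m" using nm by blast
      have uvA: "u \<in> A" "v \<in> A" using uv T by auto
      show "f u < f v"
      proof (cases "u = m")
        case True then show ?thesis using vm f'pos[of v] uvA unfolding f_def by auto
      next
        case False
        then have "(u,v) \<in> T'" using uv vm uvA unfolding T'_def by auto
        then show ?thesis using f'(2) False vm unfolding f_def by auto
      qed
    qed
    show "\<exists>f. bij_betw f A {1..card A} \<and> (\<forall>(u,v)\<in>T. f u < (f v::nat))"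
      using inj im mono unfolding bij_betw_def by blast
  qed
qed

lemma lin_ext_exists:
  assumes "finite V" "acyclic T" "T \<subseteq> V \<times> V" "R \<subseteq> T"
  shows "\<exists>f. f \<in> linear_extensions V R \<and> (\<forall>u v. (u,v) \<in> T \<longrightarrow> f u < f v)"
proof -
  obtain f0 where f0: "bij_betw f0 V {1..card V}" "\<forall>(u,v)\<in>T. f0 u < (f0 v::nat)"
    using topo_aux[OF assms(1)] assms(2,3) by blast
  have tr: "f0 u < f0 v" if "(u,v) \<in> T\<^sup>+" for u v
    using that by (induction rule: trancl_induct) (use f0(2) in auto)
  define f where "f x = (if x \<in> V then f0 x else undefined)" for x
  have bij: "bij_betw f V {1..card V}"
  proof -
    have "bij_betw f0 V {1..card V} = bij_betw f V {1..card V}"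
      by (rule bij_betw_cong) (simp add: f_def)
    then show ?thesis using f0(1) by simp
  qed
  have RT: "R\<^sup>+ \<subseteq> T\<^sup>+" using assms(4) by (rule trancl_mono_subset)
  have lt: "f u < f v" if "(u,v) \<in> R\<^sup>+" "u \<in> V" "v \<in> V" for u v
  proof -
    have "(u,v) \<in> T\<^sup>+" using RT that(1) by blast
    then have "f0 u < f0 v" by (rule tr)
    then show ?thesis unfolding f_def using that by simp
  qed
  have "f \<in> linear_extensions V R" unfolding linear_extensions_def
    using bij lt by (simp add: f_def)
  moreover have "f u < f v" if "(u,v) \<in> T" for u v
  proof -
    have "u \<in> V" "v \<in> V" using that assms(3) by auto
    then show ?thesis using f0(2) that unfolding f_def by auto
  qed
  ultimately show ?thesis by blast
qed


definition NT :: "'a set \<Rightarrow> ('a \<times> 'a) set \<Rightarrow> bool" where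
  "NT V E \<longleftrightarrow> (\<forall>u\<in>V. \<forall>v\<in>V. \<forall>w\<in>V. (u,v) \<notin> E \<longrightarrow> (v,w) \<notin> E \<longrightarrow> (u,w) \<notin> E)"

lemma eq_if_trans:
  assumes sg: "simple_graph V E" and tr: "NT V E"
  shows "\<exists>R\<in>acyclic_orientations E.
           card (acyclic_orientations (compl_graph V E)) \<le> card (linear_extensions V R)"
proof -
  have fin: "finite V" and EV: "E \<subseteq> V \<times> V" and symE: "sym E" and irE: "irrefl E"
    using sg unfolding simple_graph_def by auto
  have symE': "(x,y) \<in> E \<Longrightarrow> (y,x) \<in> E" for x y using symE unfolding sym_def by blast
  have trE: "(u,w) \<notin> E" if "u \<in> V" "v \<in> V" "w \<in> V" "(u,v) \<notin> E" "(v,w) \<notin> E" for u v w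
    using tr that unfolding NT_def by blast
  obtain g where g: "bij_betw g V {0..<card V}" using fin ex_bij_betw_finite_nat by blast
  have injg: "inj_on g V" using g by (simp add: bij_betw_def)
  define C where "C u = {w\<in>V. (u,w) \<notin> E}" for u
  define h where "h u = Min (g ` C u)" for u
  have Cfin: "finite (C u)" for u using fin unfolding C_def by simp
  have Cself: "u \<in> C u" if "u \<in> V" for u using that irE unfolding C_def irrefl_def by auto
  have hin: "\<exists>w\<in>C u. h u = g w" if "u \<in> V" for u
  proof -
    have "h u \<in> g ` C u" unfolding h_def using Cfin Cself[OF that] by (intro Min_in) auto
    then show ?thesis by auto
  qed
  have hsame: "h u = h v" if uv: "u \<in> V" "v \<in> V" "(u,v) \<notin> E" for u v
  proof -
    have "C u = C v"
    proof (rule set_eqI)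
      fix w show "w \<in> C u \<longleftrightarrow> w \<in> C v"
      proof
        assume "w \<in> C u"
        then have w: "w \<in> V" "(u,w) \<notin> E" unfolding C_def by auto
        have "(v,u) \<notin> E" using uv symE' by blast
        then have "(v,w) \<notin> E" using trE[of v u w] uv w by blast
        then show "w \<in> C v" using w unfolding C_def by auto
      next
        assume "w \<in> C v"
        then have w: "w \<in> V" "(v,w) \<notin> E" unfolding C_def by auto
        then have "(u,w) \<notin> E" using trE[of u v w] uv w by blast
        then show "w \<in> C u" using w unfolding C_def by auto
      qed
    qed
    then show ?thesis unfolding h_def by simp
  qed
  have hdiff: "h u \<noteq> h v" if uv: "(u,v) \<in> E" for u v
  proof
    assume eq: "h u = h v"
    have V: "u \<in> V" "v \<in> V" using uv EV by auto
    obtain w1 where w1: "w1 \<in> C u" "h u = g w1" using hin[OF V(1)] by blast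
    obtain w2 where w2: "w2 \<in> C v" "h v = g w2" using hin[OF V(2)] by blast
    have w12V: "w1 \<in> V" "w2 \<in> V" using w1 w2 unfolding C_def by auto
    have "w1 = w2" using eq w1 w2 injg w12V by (metis inj_onD)
    then have "(u,w1) \<notin> E" "(w1,v) \<notin> E" using w1 w2 symE' unfolding C_def by auto
    then have "(u,v) \<notin> E" using trE[of u w1 v] V w12V by blast
    then show False using uv by blast
  qed
  define R where "R = ori h E"
  have RA: "R \<in> acyclic_orientations E" unfolding R_def by (rule ori_acyc[OF symE hdiff])
  then have RO: "orientation E R" unfolding acyclic_orientations_def by simp
  let ?A = "acyclic_orientations (compl_graph V E)"
  let ?phi = "\<lambda>f. ori f (compl_graph V E)"
  have surj: "?A \<subseteq> ?phi ` linear_extensions V R"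
  proof
    fix Q assume Q: "Q \<in> ?A"
    have QO: "orientation (compl_graph V E) Q" and Qa: "acyclic Q"
      using Q unfolding acyclic_orientations_def by auto
    have Qc: "Q \<subseteq> compl_graph V E" using QO unfolding orientation_def by simp
    define T where "T = R \<union> Q"
    have key: "h x < h y \<or> (h x = h y \<and> (x,y) \<in> Q\<^sup>+)" if "(x,y) \<in> T\<^sup>+" for x y
      using that
    proof (induction rule: trancl_induct)
      case (base y)
      show ?case
      proof (cases "(x,y) \<in> R")
        case True then show ?thesis unfolding R_def ori_def by auto
      next
        case False
        then have "(x,y) \<in> Q" using base unfolding T_def by auto
        moreover then have "(x,y) \<in> compl_graph V E" using Qc by auto
        then have "h x = h y" using hsame unfolding compl_graph_def by auto
        ultimately show ?thesis by auto
      qed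
    next
      case (step y z)
      show ?case
      proof (cases "(y,z) \<in> R")
        case True
        then have "h y < h z" unfolding R_def ori_def by auto
        then show ?thesis using step.IH by auto
      next
        case False
        then have yz: "(y,z) \<in> Q" using step unfolding T_def by auto
        then have "(y,z) \<in> compl_graph V E" using Qc by auto
        then have hyz: "h y = h z" using hsame unfolding compl_graph_def by auto
        show ?thesis
        proof (cases "h x < h y")
          case True then show ?thesis using hyz by auto
        next
          case False
          then have "h x = h y" "(x,y) \<in> Q\<^sup>+" using step.IH by auto
          moreover note yz
          moreover have "(x,z) \<in> Q\<^sup>+" using \<open>(x,y) \<in> Q\<^sup>+\<close> yz by (rule trancl_into_trancl)
          ultimately show ?thesis using hyz by simp
        qed
      qed
    qed
    have Ta: "acyclic T" unfolding acyclic_def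
    proof
      fix x show "(x,x) \<notin> T\<^sup>+"
      proof
        assume "(x,x) \<in> T\<^sup>+"
        then have "(x,x) \<in> Q\<^sup>+" using key by blast
        then show False using Qa unfolding acyclic_def by blast
      qed
    qed
    have TV: "T \<subseteq> V \<times> V"
    proof -
      have "R \<subseteq> E" using RO unfolding orientation_def by simp
      moreover have "compl_graph V E \<subseteq> V \<times> V" unfolding compl_graph_def by auto
      ultimately show ?thesis using EV Qc unfolding T_def by blast
    qed
    obtain f where f: "f \<in> linear_extensions V R" "\<And>u v. (u,v) \<in> T \<Longrightarrow> f u < f v"
      using lin_ext_exists[OF fin Ta TV, of R] unfolding T_def by blast
    have "ori f (compl_graph V E) = Q"
    proof (rule set_eqI, rule iffI)
      fix p assume p: "p \<in> ori f (compl_graph V E)"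
      obtain x y where xy: "p = (x,y)" by (cases p)
      have c: "(x,y) \<in> compl_graph V E" and lt: "f x < f y" using p xy unfolding ori_def by auto
      show "p \<in> Q"
      proof (rule ccontr)
        assume "p \<notin> Q"
        then have "(y,x) \<in> Q" using QO c xy unfolding orientation_def by blast
        then have "f y < f x" using f(2) unfolding T_def by blast
        then show False using lt by simp
      qed
    next
      fix p assume p: "p \<in> Q"
      obtain x y where xy: "p = (x,y)" by (cases p)
      have "f x < f y" using f(2) p xy unfolding T_def by blast
      then show "p \<in> ori f (compl_graph V E)" using p xy Qc unfolding ori_def by auto
    qed
    then show "Q \<in> ?phi ` linear_extensions V R" using f(1) by force
  qed
  have finA: "finite ?A" using finite_acyc compl_props sg by blast
  have "?phi ` linear_extensions V R \<subseteq> ?A" using phi_in sg by blast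
  then have "finite (?phi ` linear_extensions V R)" using finA finite_subset by blast
  then have "card ?A \<le> card (?phi ` linear_extensions V R)" using surj card_mono by blast
  also have "\<dots> = card (linear_extensions V R)" using card_image phi_inj[OF sg RO] by blast
  finally show ?thesis using RA by blast
qed


lemma lt_if_not_trans:
  assumes sg: "simple_graph V E" and ntr: "\<not> NT V E" and RA: "R \<in> acyclic_orientations E"
  shows "card (linear_extensions V R) < card (acyclic_orientations (compl_graph V E))"
proof -
  have fin: "finite V" and EV: "E \<subseteq> V \<times> V" and symE: "sym E" and irE: "irrefl E"
    using sg unfolding simple_graph_def by auto
  have symE': "(x,y) \<in> E \<Longrightarrow> (y,x) \<in> E" for x y using symE unfolding sym_def by blast
  have RO: "orientation E R" using RA unfolding acyclic_orientations_def by simp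
  obtain u v w where uvw: "u \<in> V" "v \<in> V" "w \<in> V" "(u,v) \<notin> E" "(v,w) \<notin> E" "(u,w) \<in> E"
    using ntr unfolding NT_def by blast
  have "\<exists>a c. (a,c) \<in> R \<and> ((a = u \<and> c = w) \<or> (a = w \<and> c = u))"
    using RO uvw(6) unfolding orientation_def by blast
  then obtain a c where ac: "(a,c) \<in> R" "(a = u \<and> c = w) \<or> (a = w \<and> c = u)" by blast
  have av: "(a,v) \<notin> E" and vc: "(v,c) \<notin> E" using ac(2) uvw symE' by auto
  have aV: "a \<in> V" and cV: "c \<in> V" using ac(2) uvw by auto
  have acE: "(a,c) \<in> E" using ac(1) RO unfolding orientation_def by blast
  have anv: "a \<noteq> v" using acE vc by auto
  have cnv: "c \<noteq> v" using acE av by auto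
  have anc: "a \<noteq> c" using acE irE unfolding irrefl_def by auto
  obtain g0 where g0: "bij_betw g0 V {0..<card V}" using fin ex_bij_betw_finite_nat by blast
  have injg0: "inj_on g0 V" using g0 by (simp add: bij_betw_def)
  define g where "g x = (if x = c then 0 else if x = v then 1 else if x = a then 2 else g0 x + (3::nat))" for x
  have injg: "g x \<noteq> g y" if "x \<in> V" "y \<in> V" "x \<noteq> y" for x y
  proof
    assume "g x = g y"
    then have "g0 x = g0 y \<and> x \<noteq> a \<and> x \<noteq> c \<and> x \<noteq> v \<and> y \<noteq> a \<and> y \<noteq> c \<and> y \<noteq> v"
      using that anv cnv anc unfolding g_def by (auto split: if_splits)
    then show False using injg0 that by (meson inj_onD)
  qed
  let ?A = "acyclic_orientations (compl_graph V E)"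
  let ?phi = "\<lambda>f. ori f (compl_graph V E)"
  define Q where "Q = ori g (compl_graph V E)"
  have QA: "Q \<in> ?A" unfolding Q_def
  proof (rule ori_acyc)
    show "sym (compl_graph V E)" using compl_props sg by blast
    fix x y assume "(x,y) \<in> compl_graph V E"
    then show "g x \<noteq> g y" using injg unfolding compl_graph_def by auto
  qed
  have Qn: "Q \<notin> ?phi ` linear_extensions V R"
  proof
    assume "Q \<in> ?phi ` linear_extensions V R"
    then obtain f where f: "f \<in> linear_extensions V R" "Q = ori f (compl_graph V E)" by blast
    have "(c,v) \<in> compl_graph V E" using cV uvw(2) cnv vc symE' unfolding compl_graph_def by blast
    moreover have "g c < g v" unfolding g_def using cnv by simp
    ultimately have "(c,v) \<in> Q" unfolding Q_def ori_def by simp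
    then have 1: "f c < f v" using f(2) unfolding ori_def by simp
    have "(v,a) \<in> compl_graph V E" using aV uvw(2) anv av symE' unfolding compl_graph_def by blast
    moreover have "g v < g a" unfolding g_def using cnv anv anc by simp
    ultimately have "(v,a) \<in> Q" unfolding Q_def ori_def by simp
    then have 2: "f v < f a" using f(2) unfolding ori_def by simp
    have "(a,c) \<in> R\<^sup>+" using ac(1) by blast
    then have "f a < f c" using f(1) aV cV unfolding linear_extensions_def by blast
    then show False using 1 2 by simp
  qed
  have finA: "finite ?A" using finite_acyc compl_props sg by blast
  have "?phi ` linear_extensions V R \<subseteq> ?A" using phi_in sg by blast
  then have "?phi ` linear_extensions V R \<subset> ?A" using QA Qn by blast
  then have "card (?phi ` linear_extensions V R) < card ?A" using finA psubset_card_mono by blast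
  moreover have "card (?phi ` linear_extensions V R) = card (linear_extensions V R)"
    using card_image phi_inj[OF sg RO] by blast
  ultimately show ?thesis by simp
qed

lemma mp_iff:
  assumes sg: "simple_graph V E" and ne: "V \<noteq> {}"
  shows "(\<exists>p. 1 \<le> p \<and> p \<le> card V \<and> complete_multipartite V E p) \<longleftrightarrow> NT V E"
proof
  assume "\<exists>p. 1 \<le> p \<and> p \<le> card V \<and> complete_multipartite V E p"
  then obtain P where P: "partition_on V P"
    and adj: "\<forall>u\<in>V. \<forall>v\<in>V. (u, v) \<in> E \<longleftrightarrow> \<not> (\<exists>B\<in>P. u \<in> B \<and> v \<in> B)"
    unfolding complete_multipartite_def by blast
  have dj: "disjoint P" using P unfolding partition_on_def by simp
  show "NT V E" unfolding NT_def
  proof (intro ballI impI)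
    fix u v w assume V: "u \<in> V" "v \<in> V" "w \<in> V" and uv: "(u,v) \<notin> E" and vw: "(v,w) \<notin> E"
    obtain B where B: "B \<in> P" "u \<in> B" "v \<in> B" using adj V uv by blast
    obtain B' where B': "B' \<in> P" "v \<in> B'" "w \<in> B'" using adj V vw by blast
    have "B = B'" using dj B B' unfolding disjoint_def by blast
    then show "(u,w) \<notin> E" using adj V B B' by blast
  qed
next
  assume tr: "NT V E"
  have fin: "finite V" and EV: "E \<subseteq> V \<times> V" and symE: "sym E" and irE: "irrefl E"
    using sg unfolding simple_graph_def by auto
  have symE': "(x,y) \<in> E \<Longrightarrow> (y,x) \<in> E" for x y using symE unfolding sym_def by blast
  have trE: "(u,w) \<notin> E" if "u \<in> V" "v \<in> V" "w \<in> V" "(u,v) \<notin> E" "(v,w) \<notin> E" for u v w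
    using tr that unfolding NT_def by blast
  define C where "C u = {w\<in>V. (u,w) \<notin> E}" for u
  define P where "P = C ` V"
  have Cself: "u \<in> C u" if "u \<in> V" for u using that irE unfolding C_def irrefl_def by auto
  have Ceq: "C x = C y" if "x \<in> V" "y \<in> V" "z \<in> C x" "z \<in> C y" for x y z
  proof -
    have z: "z \<in> V" "(x,z) \<notin> E" "(y,z) \<notin> E" using that unfolding C_def by auto
    have xy: "(x,y) \<notin> E" using trE[of x z y] z that symE' by blast
    show ?thesis
    proof (rule set_eqI)
      fix w show "w \<in> C x \<longleftrightarrow> w \<in> C y"
      proof
        assume "w \<in> C x"
        then have w: "w \<in> V" "(x,w) \<notin> E" unfolding C_def by auto
        have "(y,w) \<notin> E" using trE[of y x w] xy symE' that w by blast
        then show "w \<in> C y" using w unfolding C_def by auto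
      next
        assume "w \<in> C y"
        then have w: "w \<in> V" "(y,w) \<notin> E" unfolding C_def by auto
        have "(x,w) \<notin> E" using trE[of x y w] xy that w by blast
        then show "w \<in> C x" using w unfolding C_def by auto
      qed
    qed
  qed
  have part: "partition_on V P" unfolding partition_on_def
  proof (intro conjI)
    show "\<Union> P = V" unfolding P_def using Cself unfolding C_def by blast
    show "disjoint P" unfolding disjoint_def P_def
    proof (intro ballI impI)
      fix X Y assume X: "X \<in> C ` V" and Y: "Y \<in> C ` V" and XY: "X \<noteq> Y"
      then obtain x y where "x \<in> V" "y \<in> V" "X = C x" "Y = C y" by blast
      then show "X \<inter> Y = {}" using Ceq XY by blast
    qed
    show "{} \<notin> P" unfolding P_def using Cself by blast
  qed
  have finP: "finite P" unfolding P_def using fin by simp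
  have p1: "1 \<le> card P"
  proof -
    have "P \<noteq> {}" unfolding P_def using ne by simp
    then show ?thesis using finP by (simp add: Suc_le_eq card_gt_0_iff)
  qed
  have p2: "card P \<le> card V" unfolding P_def using fin by (rule card_image_le)
  have adj: "\<forall>u\<in>V. \<forall>v\<in>V. (u, v) \<in> E \<longleftrightarrow> \<not> (\<exists>B\<in>P. u \<in> B \<and> v \<in> B)"
  proof (intro ballI)
    fix u v assume uv: "u \<in> V" "v \<in> V"
    show "(u, v) \<in> E \<longleftrightarrow> \<not> (\<exists>B\<in>P. u \<in> B \<and> v \<in> B)"
    proof
      assume e: "(u,v) \<in> E"
      show "\<not> (\<exists>B\<in>P. u \<in> B \<and> v \<in> B)"
      proof
        assume "\<exists>B\<in>P. u \<in> B \<and> v \<in> B"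
        then obtain x where x: "x \<in> V" "u \<in> C x" "v \<in> C x" unfolding P_def by blast
        then have "(x,u) \<notin> E" "(x,v) \<notin> E" unfolding C_def by auto
        then have "(u,v) \<notin> E" using trE[of u x v] x uv symE' by blast
        then show False using e by blast
      qed
    next
      assume "\<not> (\<exists>B\<in>P. u \<in> B \<and> v \<in> B)"
      moreover have "u \<in> C u" using Cself uv by blast
      moreover have "C u \<in> P" unfolding P_def using uv by blast
      ultimately have "v \<notin> C u" by blast
      then show "(u,v) \<in> E" using uv unfolding C_def by auto
    qed
  qed
  show "\<exists>p. 1 \<le> p \<and> p \<le> card V \<and> complete_multipartite V E p"
    unfolding complete_multipartite_def using part finP p1 p2 adj by blast
qed

theorem proposition4p7:
  fixes V :: "'a set" and E :: "('a \<times> 'a) set"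
  assumes "simple_graph V E" and "V \<noteq> {}"
  shows "eps V E \<le> card (acyclic_orientations (compl_graph V E)) \<and>
         (eps V E = card (acyclic_orientations (compl_graph V E)) \<longleftrightarrow>
           (\<exists>p. 1 \<le> p \<and> p \<le> card V \<and> complete_multipartite V E p))"
proof -
  let ?A = "card (acyclic_orientations (compl_graph V E))"
  let ?S = "(\<lambda>R. card (linear_extensions V R)) ` acyclic_orientations E"
  have finE: "finite E" using assms(1) unfolding simple_graph_def
    by (meson finite_SigmaI finite_subset)
  have finS: "finite ?S" using finite_acyc[OF finE] by simp
  have neS: "?S \<noteq> {}" using acyc_E_nonempty[OF assms(1)] by simp
  have le: "eps V E \<le> ?A" unfolding eps_def using finS neS card_le[OF assms(1)]
    by (simp add: Max_le_iff)
  have eq: "eps V E = ?A \<longleftrightarrow> NT V E"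
  proof
    assume e: "eps V E = ?A"
    show "NT V E"
    proof (rule ccontr)
      assume "\<not> NT V E"
      then have "eps V E < ?A" unfolding eps_def using finS neS lt_if_not_trans[OF assms(1)]
        by (simp add: Max_less_iff)
      then show False using e by simp
    qed
  next
    assume "NT V E"
    then obtain R where R: "R \<in> acyclic_orientations E" "?A \<le> card (linear_extensions V R)"
      using eq_if_trans[OF assms(1)] by blast
    have "card (linear_extensions V R) \<le> eps V E" unfolding eps_def using finS R(1) by (simp add: Max_ge)
    then show "eps V E = ?A" using le R(2) by simp
  qed
  show ?thesis using le eq mp_iff[OF assms] by simp
qed

end
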